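(* For every integer $k\ge1$, with $r_k$, $C_{\mathrm{Td}}$, $C_\sigma$, $C_\chi$ as below, one has \[ \frac{C_{\mathrm{Td}}}{C_\sigma+C_\chi}>4^k,\qquad \frac{C_\sigma}{C_\chi}\ge 3^k . \] Here $r_k$ is defined by $\binom{4k}{2k}B_k^2\,r_k=B_{2k}$, and $C_{\mathrm{Td}}=2^{4k+1}\big[(2^{4k-1}-1)(1-r_k)+(3-2^{2k+1})\big]$, $C_\sigma=1+r_k$, $C_\chi=2^{4k+1}(2^{2k}-1)^2\frac{B_{2k}}{(4k)!}$.
   Context: $B_m$ denotes the $m$-th Bernoulli number without sign, $B_m = \frac{(2m)!\,\zeta(2m)}{2^{2m-1}\pi^{2m}}$ (so $B_1=1/6$, $B_2=1/30$), where $\zeta$ is the Riemann zeta function. *)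

theory Defs
  imports Complex_Main
begin

definition zeta_nat :: "nat \<Rightarrow> real" where
  "zeta_nat s = (\<Sum>n. 1 / (real (Suc n)) ^ s)"

text \<open>Unsigned Bernoulli number B_m (B_1 = 1/6, B_2 = 1/30), as in the paper.\<close>
definition bern :: "nat \<Rightarrow> real" where
  "bern m = fact (2*m) * zeta_nat (2*m) / (2 ^ (2*m - 1) * pi ^ (2*m))"

definition r_k :: "nat \<Rightarrow> real" where
  "r_k k = bern (2*k) / (real ((4*k) choose (2*k)) * (bern k)^2)"

definition C_Td :: "nat \<Rightarrow> real" where
  "C_Td k = 2 ^ (4*k+1) * ((2 ^ (4*k-1) - 1) * (1 - r_k k) + (3 - 2 ^ (2*k+1)))"

definition C_sigma :: "nat \<Rightarrow> real" where
  "C_sigma k = 1 + r_k k"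

definition C_chi :: "nat \<Rightarrow> real" where
  "C_chi k = 2 ^ (4*k+1) * (2 ^ (2*k) - 1)^2 * bern (2*k) / fact (4*k)"

end

theory Submission imports Defs "HOL-Analysis.Analysis" "HOL-Real_Asymp.Real_Asymp" begin

lemma lim4: "((\<lambda>y::real. pi^4 * ((y^2/6 - 1 + sin y/y) / y^4)) \<longlongrightarrow> pi^4 * (1/120)) (at_right 0)"
proof -
  have "((\<lambda>y::real. (y^2/6 - 1 + sin y/y) / y^4) \<longlongrightarrow> 1/120) (at_right 0)"
    by real_asymp
  thus ?thesis by (intro tendsto_mult tendsto_const)
qed

lemma weier:
  fixes b :: "nat \<Rightarrow> real"
  assumes "\<And>k. 0 \<le> b k \<and> b k \<le> 1"
  shows "1 - (\<Sum>k=1..n. b k) \<le> (\<Prod>k=1..n. 1 - b k) \<and> 0 \<le> (\<Prod>k=1..n. 1 - b k) \<and> (\<Prod>k=1..n. 1 - b k) \<le> 1"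
proof (induction n)
  case 0
  then show ?case by simp
next
  case (Suc n)
  define P where "P = (\<Prod>k=1..n. 1 - b k)"
  define S where "S = (\<Sum>k=1..n. b k)"
  have b: "0 \<le> b (Suc n)" "b (Suc n) \<le> 1" using assms by auto
  have ih: "1 - S \<le> P" "0 \<le> P" "P \<le> 1" using Suc unfolding P_def S_def by auto
  have e1: "(\<Prod>k=1..Suc n. 1 - b k) = P * (1 - b (Suc n))" unfolding P_def by (simp add: prod.cl_ivl_Suc)
  have e2: "(\<Sum>k=1..Suc n. b k) = S + b (Suc n)" unfolding S_def by (simp add: sum.cl_ivl_Suc)
  have "P * b (Suc n) \<le> 1 * b (Suc n)" using ih b by (intro mult_right_mono) auto
  moreover have "0 \<le> P * (1 - b (Suc n))" using ih b by simp
  moreover have "P * (1 - b (Suc n)) \<le> 1" using ih b by (simp add: mult_le_one)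
  ultimately show ?case unfolding e1 e2 using ih by (simp add: algebra_simps)
qed

lemma sum_shift1: "(\<Sum>k=1..n. f k) = (\<Sum>k<n. f (Suc k))"
  by (induction n) (auto simp: sum.cl_ivl_Suc)

lemma zeta4_le: "zeta_nat 4 \<le> pi^4/90"
proof -
  define a where "a n = 1/(real (Suc n))^2" for n
  define H where "H n = (\<Sum>k<n. a k)" for n
  have a_nn: "0 \<le> a n" for n by (simp add: a_def)
  have sa: "a sums (pi^2/6)"
    using inverse_squares_sums unfolding a_def by (simp add: add.commute)
  have Hlim: "H \<longlonglongrightarrow> pi^2/6" using sa unfolding sums_def H_def .
  have Hle: "H n \<le> pi^2/6" for n
    unfolding H_def using sa a_nn by (metis sum_le_suminf sums_iff finite_lessThan)
  have Hnn: "0 \<le> H n" for n unfolding H_def using a_nn by (simp add: sum_nonneg)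
  have a_le1: "a n \<le> 1" for n by (simp add: a_def)
  have sq_summ: "summable (\<lambda>n. (a n)^2)"
    apply (rule summable_comparison_test[OF _ sums_summable[OF sa]])
    using a_nn a_le1 by (auto intro!: exI[of _ 0] simp: power2_eq_square mult_left_le_one_le)
  have z4: "zeta_nat 4 = (\<Sum>n. (a n)^2)"
    unfolding zeta_nat_def a_def by (simp add: power_divide flip: power_mult)
  have sH_summ: "summable (\<lambda>n. a n * H n)"
    apply (rule summable_comparison_test[OF _ summable_mult2[OF sums_summable[OF sa], of "pi^2/6"]])
  proof (intro exI[of _ 0] allI impI)
    fix n
    have "a n * H n \<le> a n * (pi^2/6)" using a_nn Hle by (intro mult_left_mono)
    thus "norm (a n * H n) \<le> a n * (pi^2/6)" using a_nn Hnn by simp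
  qed
  define S where "S = (\<Sum>n. a n * H n)"
  have fin: "(H N)^2 = (\<Sum>n<N. (a n)^2) + 2 * (\<Sum>n<N. a n * H n)" for N
    by (induction N) (auto simp: H_def power2_eq_square algebra_simps)
  have l1: "(\<lambda>N. (H N)^2) \<longlonglongrightarrow> (pi^2/6)^2" by (intro tendsto_intros Hlim)
  have l2: "(\<lambda>N. (\<Sum>n<N. (a n)^2) + 2 * (\<Sum>n<N. a n * H n)) \<longlonglongrightarrow> zeta_nat 4 + 2 * S"
    unfolding z4 S_def
    by (intro tendsto_intros summable_LIMSEQ sq_summ sH_summ)
  have eq: "(pi^2/6)^2 = zeta_nat 4 + 2 * S"
    using LIMSEQ_unique[OF l1] l2 fin by simp
  have lowS: "pi^4 * ((y^2/6 - 1 + sin y/y) / y^4) \<le> S" if y: "0 < y" "y < pi" for y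
  proof -
    define x where "x = y / pi"
    have x: "0 < x" "x < 1" using y pi_gt_zero unfolding x_def by (auto simp: field_simps)
    define P where "P n = (\<Prod>k=1..n. 1 - x^2 / of_nat k^2)" for n
    have "(\<lambda>n. P n - P (Suc n)) sums (P 0 - sin (pi * x) / (pi * x))"
      unfolding P_def using x by (intro telescope_sums' sin_product_formula_real') auto
    also have "(\<lambda>n. P n - P (Suc n)) = (\<lambda>n. (x^2 / of_nat (Suc n)^2) * P n)"
      unfolding P_def by (simp add: prod.nat_ivl_Suc' algebra_simps)
    also have "P 0 = 1" by (simp add: P_def)
    finally have s1: "(\<lambda>n. x^2 / (of_nat (Suc n))^2 * P n) sums (1 - sin (pi * x) / (pi * x))" .
    have Pge: "1 - x^2 * H n \<le> P n" for n
    proof -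
      have "1 - (\<Sum>k=1..n. x^2 / of_nat k^2) \<le> P n"
        unfolding P_def
      proof (rule weier[THEN conjunct1])
        fix k :: nat
        show "0 \<le> x\<^sup>2 / (real k)\<^sup>2 \<and> x\<^sup>2 / (real k)\<^sup>2 \<le> 1"
        proof (cases "k = 0")
          case False
          have "x^2 \<le> 1" using x by (simp add: abs_square_le_1)
          also have "1 \<le> (real k)^2" using False by simp
          finally show ?thesis using False by (simp add: field_simps)
        qed simp
      qed
      moreover have "(\<Sum>k=1..n. x^2 / of_nat k^2) = x^2 * H n"
        unfolding H_def a_def sum_shift1 by (simp add: sum_distrib_left)
      ultimately show ?thesis by simp
    qed
    have s2: "(\<lambda>n. x^2 * a n - x^4 * (a n * H n)) sums (x^2 * (pi^2/6) - x^4 * S)"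
      unfolding S_def by (intro sums_diff sums_mult sa summable_sums sH_summ)
    have "x^2 * (pi^2/6) - x^4 * S \<le> 1 - sin (pi * x) / (pi * x)"
    proof (rule sums_le[OF _ s2 s1])
      fix n
      have "x^2 * a n * (1 - x^2 * H n) \<le> x^2 * a n * P n"
        using Pge[of n] a_nn[of n] by (intro mult_left_mono) auto
      moreover have "x^2 * a n - x^4 * (a n * H n) = x^2 * a n * (1 - x^2 * H n)"
        by (simp add: algebra_simps power4_eq_xxxx power2_eq_square)
      moreover have "x^2 / (of_nat (Suc n))^2 * P n = x^2 * a n * P n"
        by (simp add: a_def)
      ultimately show "x^2 * a n - x^4 * (a n * H n) \<le> x^2 / (of_nat (Suc n))^2 * P n"
        by simp
    qed
    moreover have e: "pi * x = y" "x^2 * (pi^2/6) = y^2/6" "x^4 * S = y^4 / pi^4 * S"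
      unfolding x_def by (auto simp: field_simps)
    ultimately have "y^2/6 - y^4/pi^4 * S \<le> 1 - sin y / y"
      unfolding e by simp
    hence "y^2/6 - 1 + sin y / y \<le> y^4 / pi^4 * S" by linarith
    hence "(y^2/6 - 1 + sin y / y) / y^4 \<le> S / pi^4" using y by (simp add: field_simps)
    thus ?thesis by (simp add: field_simps)
  qed
  have "pi^4 * (1/120) \<le> S"
  proof (rule tendsto_le[OF _ tendsto_const lim4])
    show "eventually (\<lambda>y. pi^4 * ((y^2/6 - 1 + sin y/y) / y^4) \<le> S) (at_right 0)"
      unfolding eventually_at_right_field using pi_gt_zero lowS by blast
  qed simp
  thus ?thesis using eq by (simp add: power2_eq_square power4_eq_xxxx)
qed

lemma sq_summ: "summable (\<lambda>n. 1 / (real (Suc n))^2)"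
proof -
  have "(\<lambda>n. 1 / (real (Suc n))^2) sums (pi^2/6)"
    using inverse_squares_sums by (simp add: add.commute)
  thus ?thesis by (rule sums_summable)
qed

lemma zeta_summ: assumes "2 \<le> s" shows "summable (\<lambda>n. 1 / (real (Suc n))^s)"
proof (rule summable_comparison_test[OF _ sq_summ])
  show "\<exists>N. \<forall>n\<ge>N. norm (1 / (real (Suc n))^s) \<le> 1 / (real (Suc n))^2"
  proof (intro exI[of _ 0] allI impI)
    fix n :: nat
    have "(real (Suc n))^2 \<le> (real (Suc n))^s" using assms by (intro power_increasing) auto
    thus "norm (1 / (real (Suc n))^s) \<le> 1 / (real (Suc n))^2"
      by (simp add: frac_le)
  qed
qed

lemma zeta_ge1: assumes "2 \<le> s" shows "1 \<le> zeta_nat s"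
proof -
  have "(\<Sum>n<1. 1 / (real (Suc n))^s) \<le> zeta_nat s"
    unfolding zeta_nat_def by (rule sum_le_suminf[OF zeta_summ[OF assms]]) auto
  thus ?thesis by simp
qed

lemma zeta_mono: assumes "2 \<le> s" "s \<le> t" shows "zeta_nat t \<le> zeta_nat s"
  unfolding zeta_nat_def
proof (rule suminf_le[OF _ zeta_summ zeta_summ])
  fix n :: nat
  have "(real (Suc n))^s \<le> (real (Suc n))^t" using assms by (intro power_increasing) auto
  thus "1 / (real (Suc n))^t \<le> 1 / (real (Suc n))^s"
    by (intro divide_left_mono) auto
qed (use assms in auto)

lemma zeta2: "zeta_nat 2 = pi^2/6"
  using inverse_squares_sums unfolding zeta_nat_def by (simp add: sums_iff add.commute)

lemma p1: "k \<ge> 1 \<Longrightarrow> (2::real)^(4*k-1) = 2^(2*k)*2^(2*k)/2"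
proof -
  assume k: "k \<ge> 1"
  define m where "m = 4*k-2"
  have e: "4*k-1 = m+1" "2*k+2*k = m+2" using k unfolding m_def by auto
  have "(2::real)^(4*k-1) = 2^(m+1)" by (simp only: e)
  moreover have "(2::real)^(2*k)*2^(2*k) = 2^(m+2)" by (simp only: power_add[symmetric] e)
  ultimately show ?thesis by simp
qed

lemma p2: "k \<ge> 1 \<Longrightarrow> (2::real)^(2*k-1) = 2^(2*k)/2"
proof -
  assume "k \<ge> 1" then obtain j where k: "k = Suc j" by (cases k) auto
  show ?thesis by (simp add: k)
qed

lemma r_eq: assumes "k \<ge> 1" shows "r_k k = zeta_nat (4*k) / (2 * zeta_nat (2*k)^2)"
proof -
  have z: "zeta_nat (2*k) \<ge> 1" "zeta_nat (4*k) \<ge> 1" using assms by (auto intro!: zeta_ge1)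
  have c: "real ((4*k) choose (2*k)) = fact (4*k) / (fact (2*k) * fact (2*k))"
  proof -
    have "real ((4*k) choose (2*k)) = fact (4*k) / (fact (2*k) * fact (4*k - 2*k))"
      by (rule binomial_fact) simp
    moreover have "4*k - 2*k = 2*k" by simp
    ultimately show ?thesis by metis
  qed
  have p3: "pi^(4*k) = pi^(2*k)*pi^(2*k)" by (simp only: power_add[symmetric]) simp
  have p4: "2*(2*k) = 4*k" by simp
  show ?thesis
    unfolding r_k_def bern_def p4 c p1[OF assms] p2[OF assms] p3 using z
    by (simp add: field_simps power2_eq_square)
qed

lemma chi_eq: assumes "k \<ge> 1"
  shows "C_chi k = 4 * (2^(2*k) - 1)^2 * zeta_nat (4*k) / (pi^(2*k)*pi^(2*k))"
proof -
  have p3: "pi^(4*k) = pi^(2*k)*pi^(2*k)" by (simp only: power_add[symmetric]) simp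
  have p4: "2*(2*k) = 4*k" by simp
  have p5: "(2::real)^(4*k+1) = 2^(2*k)*2^(2*k)*2" by (simp only: power_add[symmetric]) simp
  show ?thesis
    unfolding C_chi_def bern_def p4 p1[OF assms] p3 p5
    by (simp add: field_simps)
qed

lemma Td_eq: assumes "k \<ge> 1"
  shows "C_Td k = 2 * (2^(2*k))^2 * (((2^(2*k))^2/2 - 1) * (1 - r_k k) + (3 - 2 * 2^(2*k)))"
proof -
  have a: "(2::real)^(4*k+1) = 2 * (2^(2*k))^2" by (simp only: power_add[symmetric] power2_eq_square) simp
  have b: "(2::real)^(4*k-1) = (2^(2*k))^2/2" using p1[OF assms] by (simp add: power2_eq_square)
  have c: "(2::real)^(2*k+1) = 2 * 2^(2*k)" by simp
  show ?thesis unfolding C_Td_def a b c ..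
qed

theorem corollary1:
  fixes k :: nat
  assumes "k \<ge> 1"
  shows "C_Td k / (C_sigma k + C_chi k) > 4 ^ k \<and> C_sigma k / C_chi k \<ge> 3 ^ k"
proof -
  define u :: real where "u = 2^(2*k)"
  define Q where "Q = pi^(2*k)*pi^(2*k)"
  define z2 where "z2 = zeta_nat (2*k)"
  define z4 where "z4 = zeta_nat (4*k)"
  define r where "r = r_k k"
  define c where "c = C_chi k"
  have u4: "u = 4^k" unfolding u_def by (simp add: power_mult)
  have Qq: "Q = (pi^4)^k" unfolding Q_def by (simp flip: power_add power_mult add: mult.commute)
  have r_def': "r = z4 / (2 * z2^2)" unfolding r_def z2_def z4_def using r_eq[OF assms] .
  have c_def': "c = 4 * (u - 1)^2 * z4 / Q" unfolding c_def u_def Q_def z4_def using chi_eq[OF assms] .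
  have Td: "C_Td k = 2 * u^2 * ((u^2/2 - 1) * (1 - r) + (3 - 2*u))"
    unfolding u_def r_def using Td_eq[OF assms] .
  have sig: "C_sigma k = 1 + r" unfolding C_sigma_def r_def ..
  have z2ge: "1 \<le> z2" and z4ge: "1 \<le> z4" unfolding z2_def z4_def using assms by (auto intro!: zeta_ge1)
  have z42: "z4 \<le> z2" unfolding z2_def z4_def using assms by (intro zeta_mono) auto
  have Qpos: "Q > 0" unfolding Q_def by simp
  have u1: "u \<ge> 4" unfolding u4 using assms
    by (metis power_increasing power_one_right numeral_le_iff semiring_norm(69) one_le_numeral zero_le_numeral le_numeral_extra(4) order_trans linorder_le_cases)
  have pi1: "3.141592653588 \<le> pi" "pi \<le> 3.1415926535899" by (rule pi_approx)+
  have h1: "(3.14::real)^4 \<le> pi^4" by (rule power_mono) (use pi1 in auto)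
  have h2: "pi^4 \<le> (3.1416::real)^4" by (rule power_mono) (use pi1 in auto)
  have "(97::real) \<le> 3.14^4" "(3.1416::real)^4 \<le> 97.42" by (simp_all add: power_divide)
  hence q1: "97 \<le> pi^4" and q2: "pi^4 \<le> 97.42" using h1 h2 by linarith+
  have Z: "zeta_nat 4 \<le> pi^4/90" by (rule zeta4_le)
  have cpos: "0 < c" unfolding c_def' using Qpos u1 z4ge by (intro divide_pos_pos mult_pos_pos) auto
  show ?thesis
  proof (cases "k = 1")
    case True
    have U: "u = 4" "Q = pi^4" unfolding u4 Qq True by simp_all
    have z2v: "z2 = pi^2/6" unfolding z2_def True using zeta2 by simp
    have z4v: "z4 \<le> pi^4/90" unfolding z4_def True using Z by simp
    define t where "t = z4 / pi^4"
    have t: "0 < t" "t \<le> 1/90" unfolding t_def using z4ge z4v q1 by (auto simp: field_simps)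
    have rt: "r = 18 * t" unfolding r_def' z2v t_def by (simp add: field_simps power2_eq_square power4_eq_xxxx)
    have ct: "c = 36 * t" unfolding c_def' U t_def by simp
    have D: "0 < 1 + r + c" using t rt ct by simp
    have 1: "4 * (1 + r + c) < 2 * u^2 * ((u^2/2 - 1) * (1 - r) + (3 - 2*u))"
      unfolding U rt ct using t by simp
    have 2: "3 * c \<le> 1 + r" unfolding rt ct using t by simp
    show ?thesis unfolding Td sig c_def[symmetric] using D 1 2 cpos True
      by (simp add: field_simps)
  next
    case False
    hence k2: "k \<ge> 2" using assms by simp
    define Zt where "Zt = zeta_nat 4"
    have Zt: "Zt \<le> 1.0825" unfolding Zt_def using Z q2 by simp
    have z2Z: "z2 \<le> Zt" "z4 \<le> Zt" unfolding z2_def z4_def Zt_def using k2 by (auto intro!: zeta_mono)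
    have rle: "r \<le> 1/2"
    proof -
      have "z4 \<le> z2^2" using z42 z2ge by (simp add: power2_eq_square) (metis mult_le_cancel_left1 order_trans le_numeral_extra(1) linorder_not_le mult.commute mult_le_cancel_right1 order_less_le)
      thus ?thesis unfolding r_def' using z2ge by (simp add: field_simps)
    qed
    have rge: "r \<ge> 0.42"
    proof -
      have "z2^2 \<le> 1.0825^2" using z2Z z2ge Zt by (intro power_mono) auto
      hence "2 * z2^2 \<le> 2.35" by (simp add: power_divide)
      hence "1 / 2.35 \<le> 1 / (2 * z2^2)" using z2ge by (intro divide_left_mono) auto
      also have "\<dots> \<le> z4 / (2 * z2^2)" using z4ge z2ge by (intro divide_right_mono) auto
      finally show ?thesis unfolding r_def' by simp
    qed
    have u16: "u \<ge> 16" unfolding u4 using power_increasing[OF k2, of "4::real"] by simp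
    define q where "q = pi^4"
    have cle: "c \<le> 4 * Zt * (u^2 / Q)"
    proof -
      have "(u - 1)^2 \<le> u^2" using u1 by (intro power_mono) auto
      hence "(u - 1)^2 * z4 \<le> u^2 * Zt" using z2Z z4ge by (intro mult_mono) auto
      thus ?thesis unfolding c_def' using Qpos by (simp add: field_simps)
    qed
    have f16: "((4::real)^k)^2 = 16^k"
    proof -
      have "((4::real)^k)^2 = (4^2)^k" by (simp only: power_mult[symmetric] mult.commute)
      thus ?thesis by simp
    qed
    have uQ: "u^2 / Q = (16/q)^k" unfolding u4 Qq q_def f16
      by (simp add: power_divide)
    have uQ3: "3^k * (u^2 / Q) = (48/q)^k" unfolding uQ
      by (simp add: power_mult_distrib[symmetric])
    have v: "(16/q)^k \<le> 16/97"
    proof -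
      have "(16/q)^k \<le> (16/q)^1" using q1 assms unfolding q_def by (intro power_decreasing) auto
      also have "\<dots> \<le> 16/97" using q1 unfolding q_def power_one_right by (rule_tac frac_le) auto
      finally show ?thesis .
    qed
    have w: "(48/q)^k \<le> (48/97)^2"
    proof -
      have "(48/q)^k \<le> (48/q)^2" using q1 k2 unfolding q_def by (intro power_decreasing) auto
      also have "\<dots> \<le> (48/97)^2" proof (rule power_mono)
        show "48/q \<le> 48/97" using q1 unfolding q_def by (rule_tac frac_le) auto
        show "0 \<le> 48/q" using q1 unfolding q_def by simp
      qed
      finally show ?thesis .
    qed
    have Ztpos: "0 \<le> Zt" using z2Z z2ge by simp
    have c1: "c \<le> 4 * Zt * (16/97)"
    proof -
      have "4 * Zt * (u^2 / Q) \<le> 4 * Zt * (16/97)" unfolding uQ using v Ztpos by (intro mult_left_mono) auto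
      thus ?thesis using cle by linarith
    qed
    have c1': "c \<le> 0.72" using c1 Zt by simp
    have c3: "3^k * c \<le> 4 * Zt * (48/97)^2"
    proof -
      have "3^k * c \<le> 3^k * (4 * Zt * (u^2 / Q))" using cle by (intro mult_left_mono) auto
      also have "\<dots> = 4 * Zt * (3^k * (u^2 / Q))" by simp
      also have "\<dots> \<le> 4 * Zt * (48/97)^2" unfolding uQ3 using w Ztpos by (intro mult_left_mono) auto
      finally show ?thesis .
    qed
    have "(48/97::real)^2 = 2304/9409" by (simp add: power_divide)
    hence c3': "3^k * c \<le> 1 + r" using c3 Zt rge by (simp only:) simp
    have D: "0 < 1 + r + c" "1 + r + c \<le> 2.3" using rge rle cpos c1' by auto
    have Tdlow: "2 * u^2 * ((u^2/2 - 1) / 2 + (3 - 2*u)) \<le> 2 * u^2 * ((u^2/2 - 1) * (1 - r) + (3 - 2*u))"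
    proof -
      have "16 * 16 \<le> u * u" using u16 by (intro mult_mono) auto
      hence "0 \<le> u^2/2 - 1" by (simp add: power2_eq_square)
      hence "(u^2/2 - 1) * (1/2) \<le> (u^2/2 - 1) * (1 - r)" using rle
        by (intro mult_left_mono) auto
      thus ?thesis by (intro mult_left_mono) auto
    qed
    have big: "u * 2.3 < 2 * u^2 * ((u^2/2 - 1) / 2 + (3 - 2*u))"
    proof -
      have "u/4 - 2 \<ge> 2" using u16 by simp
      hence "u * (u/4 - 2) \<ge> 16 * 2" using u16 by (intro mult_mono) auto
      hence "(u^2/2 - 1) / 2 + (3 - 2*u) \<ge> 34" by (simp add: power2_eq_square algebra_simps)
      hence "2 * u^2 * ((u^2/2 - 1) / 2 + (3 - 2*u)) \<ge> 2 * u^2 * 34" using u16 by (intro mult_left_mono) auto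
      moreover have "u * 2.3 < 2 * u^2 * 34" using u16 by (simp add: power2_eq_square)
      ultimately show ?thesis by linarith
    qed
    have 1: "u * (1 + r + c) < C_Td k"
    proof -
      have "u * (1 + r + c) \<le> u * 2.3" using D u16 by (intro mult_left_mono) auto
      thus ?thesis unfolding Td using big Tdlow by linarith
    qed
    show ?thesis unfolding sig c_def[symmetric] u4[symmetric] using 1 D c3' cpos
      by (simp add: field_simps)
  qed
qed

end
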